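(* Let $\widetilde Y\in\mathbb{R}^{m\times N}$ have nonzero columns $\widetilde Y_1,\dots,\widetilde Y_N$ and let $\widetilde w\in\mathbb{R}^N$ be a deterministic vector (e.g. obtained from a data-alignment step that does not use the quantizer randomness). Run Phase II with the infinite alphabet $\mathcal A_\infty^\delta$: $\widetilde u_0=0$ and for $t=1,\dots,N$, $\widetilde q_t=\mathcal{Q}_{\mathrm{StocQ}}\bigl(\widetilde w_t+\langle\widetilde Y_t,\widetilde u_{t-1}\rangle/\|\widetilde Y_t\|_2^2\bigr)$, $\widetilde u_t=\widetilde u_{t-1}+(\widetilde w_t-\widetilde q_t)\widetilde Y_t$, so that $\widetilde u_N=\widetilde Y(\widetilde w-\widetilde q)$. Then for every $p\in\mathbb N$, $$\|\widetilde u_N\|_2\le \delta\sqrt{2\pi p m\log N}\,\max_{1\le j\le N}\|\widetilde Y_j\|_2$$ holds with probability at least $1-\sqrt2\, m/N^{p}$.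
   Context: $\mathcal A_\infty^\delta=\{k\delta:k\in\mathbb Z\}$ with $\delta>0$. The stochastic quantizer $\mathcal{Q}_{\mathrm{StocQ}}:\mathbb R\to\mathcal A_\infty^\delta$ returns $\lfloor z/\delta\rfloor\delta$ with probability $1-z/\delta+\lfloor z/\delta\rfloor$ and $(\lfloor z/\delta\rfloor+1)\delta$ otherwise (so $\mathbb E\,\mathcal{Q}_{\mathrm{StocQ}}(z)=z$); each call uses fresh randomness, independent of everything else given its argument. *)

theory Defs
  imports "HOL-Analysis.Analysis" "HOL-Probability.Probability"
begin

definition stocQ :: "real \<Rightarrow> real \<Rightarrow> real pmf" where
  "stocQ \<delta> z = map_pmf
     (\<lambda>b. if b then (of_int \<lfloor>z / \<delta>\<rfloor> + 1) * \<delta> else of_int \<lfloor>z / \<delta>\<rfloor> * \<delta>)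
     (bernoulli_pmf (z / \<delta> - of_int \<lfloor>z / \<delta>\<rfloor>))"

text \<open>Each step uses fresh randomness
  (bind of pmfs), independent of everything else given its argument.\<close>
fun phase2 :: "real \<Rightarrow> (nat \<Rightarrow> real ^ 'm) \<Rightarrow> (nat \<Rightarrow> real) \<Rightarrow> nat \<Rightarrow> (real ^ 'm) pmf" where
  "phase2 \<delta> Y w 0 = return_pmf 0"
| "phase2 \<delta> Y w (Suc t) =
     bind_pmf (phase2 \<delta> Y w t) (\<lambda>u.
       map_pmf (\<lambda>q. u + (w (Suc t) - q) *\<^sub>R Y (Suc t))
         (stocQ \<delta> (w (Suc t) + (Y (Suc t) \<bullet> u) / (norm (Y (Suc t)))\<^sup>2)))"

end

theory Submission imports Defs begin

lemma two_point_aux: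
  fixes \<theta> h :: real
  assumes "0 \<le> \<theta>" "\<theta> \<le> 1" "h \<ge> 0"
  shows "\<theta> * exp (h * (1 - \<theta>)) + (1 - \<theta>) * exp (- h * \<theta>) \<le> exp (h\<^sup>2 / 8)"
proof -
  have pos: "1 + \<theta> * (exp h - 1) > 0"
  proof -
    have "exp h \<ge> 1" using assms by simp
    hence "\<theta> * (exp h - 1) \<ge> 0" using assms by simp
    thus ?thesis by linarith
  qed
  have "-h * \<theta> + ln (1 + \<theta> * (exp h - 1)) \<le> h\<^sup>2 / 8"
    using Hoeffdings_lemma_aux[of h \<theta>] assms by simp
  hence "exp (-h * \<theta> + ln (1 + \<theta> * (exp h - 1))) \<le> exp (h\<^sup>2 / 8)" by simp
  also have "exp (-h * \<theta> + ln (1 + \<theta> * (exp h - 1))) = exp (-h*\<theta>) * (1 + \<theta> * (exp h - 1))"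
    using pos by (subst exp_add) simp
  also have "\<dots> = \<theta> * exp (h * (1 - \<theta>)) + (1 - \<theta>) * exp (- h * \<theta>)"
    by (simp add: algebra_simps exp_diff exp_minus mult_exp_exp[symmetric] right_diff_distrib divide_inverse)
  finally show ?thesis .
qed

lemma two_point:
  fixes \<theta> s :: real
  assumes "0 \<le> \<theta>" "\<theta> \<le> 1"
  shows "\<theta> * exp (s * (1 - \<theta>)) + (1 - \<theta>) * exp (- s * \<theta>) \<le> exp (s\<^sup>2 / 8)"
proof (cases "s \<ge> 0")
  case True thus ?thesis using two_point_aux assms by blast
next
  case False
  have "(1-\<theta>) * exp ((-s) * (1 - (1-\<theta>))) + (1 - (1-\<theta>)) * exp (- (-s) * (1-\<theta>)) \<le> exp ((-s)\<^sup>2 / 8)"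
    using two_point_aux[of "1-\<theta>" "-s"] assms False by simp
  thus ?thesis by (simp add: algebra_simps)
qed

lemma stocQ_mgf:
  assumes "\<delta> > 0"
  shows "(\<integral>\<^sup>+q. ennreal (exp (s * (q - z))) \<partial>stocQ \<delta> z) \<le> ennreal (exp (s\<^sup>2 * \<delta>\<^sup>2 / 8))"
proof -
  define \<theta> where "\<theta> = z / \<delta> - of_int \<lfloor>z / \<delta>\<rfloor>"
  have th: "0 \<le> \<theta>" "\<theta> \<le> 1" unfolding \<theta>_def by linarith+
  have e1: "(of_int \<lfloor>z / \<delta>\<rfloor> + 1) * \<delta> - z = \<delta> * (1 - \<theta>)"
    using assms unfolding \<theta>_def by (simp add: field_simps)
  have e2: "of_int \<lfloor>z / \<delta>\<rfloor> * \<delta> - z = - \<delta> * \<theta>"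
    using assms unfolding \<theta>_def by (simp add: field_simps)
  have "(\<integral>\<^sup>+q. ennreal (exp (s * (q - z))) \<partial>stocQ \<delta> z)
      = ennreal (exp (s * (\<delta> * (1 - \<theta>)))) * \<theta> + ennreal (exp (s * (- \<delta> * \<theta>))) * (1 - \<theta>)"
    unfolding stocQ_def using th by (simp add: e1 e2 flip: \<theta>_def)
  also have "\<dots> = ennreal (\<theta> * exp ((s*\<delta>) * (1 - \<theta>)) + (1 - \<theta>) * exp (- (s*\<delta>) * \<theta>))"
  proof -
    have a: "0 \<le> \<theta> * exp ((s*\<delta>) * (1 - \<theta>))" "0 \<le> (1 - \<theta>) * exp (- (s*\<delta>) * \<theta>)" using th by auto
    show ?thesis
      apply (subst ennreal_plus[OF a])
      apply (subst (1 2) ennreal_mult)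
      using th by (auto simp: mult_ac)
  qed
  also have "\<dots> \<le> ennreal (exp ((s*\<delta>)\<^sup>2 / 8))"
    using two_point[OF th] by (intro ennreal_leI) 
  finally show ?thesis by (simp add: power_mult_distrib)
qed

lemma mgf_phase2:
  fixes Y :: "nat \<Rightarrow> real ^ 'm"
  assumes d: "\<delta> > 0" and Yb: "\<forall>j\<in>{1..t}. Y j \<noteq> 0 \<and> norm (Y j) \<le> K"
  shows "(\<integral>\<^sup>+u. ennreal (exp (v \<bullet> u)) \<partial>phase2 \<delta> Y w t) \<le> ennreal (exp (\<delta>\<^sup>2 * K\<^sup>2 / 8 * (norm v)\<^sup>2))"
  using Yb
proof (induction t arbitrary: v)
  case 0
  thus ?case by (simp add: nn_integral_return)
next
  case (Suc t)
  define c where "c = \<delta>\<^sup>2 * K\<^sup>2 / 8"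
  define y where "y = Y (Suc t)"
  define n2 where "n2 = (norm y)\<^sup>2"
  define \<alpha> where "\<alpha> = v \<bullet> y"
  define Pv where "Pv = v - (\<alpha> / n2) *\<^sub>R y"
  have y0: "y \<noteq> 0" and yK: "norm y \<le> K" using Suc.prems unfolding y_def by auto
  have n2pos: "n2 > 0" using y0 unfolding n2_def by simp
  have n2y: "y \<bullet> y = n2" unfolding n2_def by (simp add: power2_norm_eq_inner)
  have IH: "(\<integral>\<^sup>+u. ennreal (exp (Pv \<bullet> u)) \<partial>phase2 \<delta> Y w t) \<le> ennreal (exp (c * (norm Pv)\<^sup>2))"
    using Suc.IH[of Pv] Suc.prems unfolding c_def by auto
  have pw: "exp (v \<bullet> (u + (w (Suc t) - q) *\<^sub>R y)) =
      exp (Pv \<bullet> u) * exp ((-\<alpha>) * (q - (w (Suc t) + (y \<bullet> u) / n2)))" for u q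
  proof -
    have "v \<bullet> (u + (w (Suc t) - q) *\<^sub>R y) = Pv \<bullet> u + (-\<alpha>) * (q - (w (Suc t) + (y \<bullet> u) / n2))"
      unfolding Pv_def \<alpha>_def using n2pos
      by (simp add: inner_add_right inner_diff_left algebra_simps inner_commute)
    thus ?thesis by (simp add: mult_exp_exp)
  qed
  have inner: "(\<integral>\<^sup>+q. ennreal (exp (v \<bullet> (u + (w (Suc t) - q) *\<^sub>R y)))
        \<partial>stocQ \<delta> (w (Suc t) + (y \<bullet> u) / n2))
      \<le> ennreal (exp (Pv \<bullet> u)) * ennreal (exp (\<alpha>\<^sup>2 * \<delta>\<^sup>2 / 8))" for u
  proof -
    have "(\<integral>\<^sup>+q. ennreal (exp (v \<bullet> (u + (w (Suc t) - q) *\<^sub>R y)))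
        \<partial>stocQ \<delta> (w (Suc t) + (y \<bullet> u) / n2))
      = (\<integral>\<^sup>+q. ennreal (exp (Pv \<bullet> u)) * ennreal (exp ((-\<alpha>) * (q - (w (Suc t) + (y \<bullet> u) / n2))))
        \<partial>stocQ \<delta> (w (Suc t) + (y \<bullet> u) / n2))"
      by (simp add: pw ennreal_mult)
    also have "\<dots> = ennreal (exp (Pv \<bullet> u)) * (\<integral>\<^sup>+q. ennreal (exp ((-\<alpha>) * (q - (w (Suc t) + (y \<bullet> u) / n2))))
        \<partial>stocQ \<delta> (w (Suc t) + (y \<bullet> u) / n2))"
      by (rule nn_integral_cmult) simp
    also have "\<dots> \<le> ennreal (exp (Pv \<bullet> u)) * ennreal (exp ((-\<alpha>)\<^sup>2 * \<delta>\<^sup>2 / 8))"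
      by (intro mult_left_mono stocQ_mgf d) simp
    finally show ?thesis by simp
  qed
  have "(\<integral>\<^sup>+u. ennreal (exp (v \<bullet> u)) \<partial>phase2 \<delta> Y w (Suc t))
     = (\<integral>\<^sup>+u. (\<integral>\<^sup>+q. ennreal (exp (v \<bullet> (u + (w (Suc t) - q) *\<^sub>R y)))
        \<partial>stocQ \<delta> (w (Suc t) + (y \<bullet> u) / n2)) \<partial>phase2 \<delta> Y w t)"
    by (simp add: y_def n2_def)
  also have "\<dots> \<le> (\<integral>\<^sup>+u. ennreal (exp (Pv \<bullet> u)) * ennreal (exp (\<alpha>\<^sup>2 * \<delta>\<^sup>2 / 8)) \<partial>phase2 \<delta> Y w t)"
    by (intro nn_integral_mono inner)
  also have "\<dots> = (\<integral>\<^sup>+u. ennreal (exp (Pv \<bullet> u)) \<partial>phase2 \<delta> Y w t) * ennreal (exp (\<alpha>\<^sup>2 * \<delta>\<^sup>2 / 8))"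
    by (rule nn_integral_multc) simp
  also have "\<dots> \<le> ennreal (exp (c * (norm Pv)\<^sup>2)) * ennreal (exp (\<alpha>\<^sup>2 * \<delta>\<^sup>2 / 8))"
    by (intro mult_right_mono IH) simp
  also have "\<dots> = ennreal (exp (c * (norm Pv)\<^sup>2 + \<alpha>\<^sup>2 * \<delta>\<^sup>2 / 8))"
    by (subst ennreal_mult[symmetric]) (auto simp: mult_exp_exp)
  also have "\<dots> \<le> ennreal (exp (c * (norm v)\<^sup>2))"
  proof (intro ennreal_leI exp_mono)
    have nP: "(norm Pv)\<^sup>2 = (norm v)\<^sup>2 - \<alpha>\<^sup>2 / n2"
      unfolding Pv_def power2_norm_eq_inner using n2pos n2y
      by (simp add: inner_diff_left inner_diff_right \<alpha>_def inner_commute power2_eq_square field_simps)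
    have "n2 \<le> K\<^sup>2" unfolding n2_def using yK by (simp add: power_mono)
    hence "\<delta>\<^sup>2 * n2 / 8 \<le> c" unfolding c_def by (intro divide_right_mono mult_left_mono) auto
    hence "\<alpha>\<^sup>2 * (\<delta>\<^sup>2 * n2 / 8) \<le> \<alpha>\<^sup>2 * c" by (intro mult_left_mono) auto
    hence "\<alpha>\<^sup>2 * \<delta>\<^sup>2 / 8 \<le> c * (\<alpha>\<^sup>2 / n2)" using n2pos by (simp add: field_simps)
    thus "c * (norm Pv)\<^sup>2 + \<alpha>\<^sup>2 * \<delta>\<^sup>2 / 8 \<le> c * (norm v)\<^sup>2" unfolding nP by (simp add: algebra_simps)
  qed
  finally show ?case unfolding c_def .
qed

lemma tail_phase2:
  fixes Y :: "nat \<Rightarrow> real ^ 'm"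
  assumes d: "\<delta> > 0" and Yb: "\<forall>j\<in>{1..t}. Y j \<noteq> 0 \<and> norm (Y j) \<le> K"
  shows "measure_pmf.prob (phase2 \<delta> Y w t) {u. b \<le> v \<bullet> u} \<le> exp (- b + \<delta>\<^sup>2 * K\<^sup>2 / 8 * (norm v)\<^sup>2)"
proof -
  let ?M = "phase2 \<delta> Y w t"
  have "emeasure ?M {u. b \<le> v \<bullet> u} = (\<integral>\<^sup>+u. indicator {u. b \<le> v \<bullet> u} u \<partial>?M)"
    by simp
  also have "\<dots> \<le> (\<integral>\<^sup>+u. ennreal (exp (- b)) * ennreal (exp (v \<bullet> u)) \<partial>?M)"
  proof (intro nn_integral_mono)
    fix u
    show "indicator {u. b \<le> v \<bullet> u} u \<le> ennreal (exp (- b)) * ennreal (exp (v \<bullet> u))"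
    proof (cases "b \<le> v \<bullet> u")
      case True
      hence "1 \<le> exp (- b + v \<bullet> u)" by simp
      hence "ennreal 1 \<le> ennreal (exp (- b + v \<bullet> u))" by (rule ennreal_leI)
      moreover have "ennreal (exp (- b)) * ennreal (exp (v \<bullet> u)) = ennreal (exp (- b + v \<bullet> u))"
        by (subst ennreal_mult[symmetric]) (auto simp: mult_exp_exp)
      ultimately show ?thesis using True by simp
    qed simp
  qed
  also have "\<dots> = ennreal (exp (- b)) * (\<integral>\<^sup>+u. ennreal (exp (v \<bullet> u)) \<partial>?M)"
    by (rule nn_integral_cmult) simp
  also have "\<dots> \<le> ennreal (exp (- b)) * ennreal (exp (\<delta>\<^sup>2 * K\<^sup>2 / 8 * (norm v)\<^sup>2))"
    by (intro mult_left_mono mgf_phase2 d Yb) simp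
  also have "\<dots> = ennreal (exp (- b + \<delta>\<^sup>2 * K\<^sup>2 / 8 * (norm v)\<^sup>2))"
    by (subst ennreal_mult[symmetric]) (auto simp: mult_exp_exp)
  finally show ?thesis
    by (simp add: measure_pmf.emeasure_eq_measure)
qed

lemma numeric_bound:
  fixes N p :: nat
  assumes N2: "N \<ge> 2" and p1: "p \<ge> 1"
  shows "2 * exp (- (4 * pi * real p * ln (real N))) \<le> sqrt 2 / real N ^ p"
proof -
  define L where "L = ln (real N)"
  have Lpos: "L > 0" unfolding L_def using N2 by simp
  have Np: "real N ^ p \<ge> 2"
  proof -
    have a: "real N ^ p \<ge> real N ^ 1" using N2 p1 by (intro power_increasing) auto
    have b: "real N \<ge> 2" using N2 by simp
    from a b show ?thesis unfolding power_one_right by linarith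
  qed
  have "4 * pi * real p * L \<ge> 2 * real p * L"
  proof -
    have "4 * pi \<ge> 2" using pi_ge_two by linarith
    thus ?thesis using Lpos p1 by (intro mult_right_mono) auto
  qed
  hence "exp (- (4 * pi * real p * L)) \<le> exp (- (2 * real p * L))" by simp
  also have "exp (- (2 * real p * L)) = 1 / (real N ^ p)\<^sup>2"
  proof -
    have "exp (real (2 * p) * L) = exp L ^ (2 * p)" by (rule exp_of_nat_mult)
    also have "exp L = real N" unfolding L_def using N2 by simp
    also have "real N ^ (2 * p) = (real N ^ p)\<^sup>2" by (simp add: power_mult[symmetric] mult.commute)
    finally have "exp (2 * real p * L) = (real N ^ p)\<^sup>2" by simp
    thus ?thesis by (simp add: exp_minus inverse_eq_divide)
  qed
  also have "\<dots> \<le> 1 / (2 * real N ^ p)"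
  proof -
    have "2 * real N ^ p \<le> (real N ^ p)\<^sup>2" unfolding power2_eq_square
      using Np by (intro mult_right_mono) auto
    moreover have "0 < 2 * real N ^ p * (real N ^ p)\<^sup>2" using Np N2 by (intro mult_pos_pos) auto
    ultimately show ?thesis by (intro divide_left_mono) auto
  qed
  finally have "2 * exp (- (4 * pi * real p * L)) \<le> 1 / real N ^ p" using Np by (simp add: field_simps)
  also have "\<dots> \<le> sqrt 2 / real N ^ p" using Np by (intro divide_right_mono) auto
  finally show ?thesis unfolding L_def .
qed
theorem mainTheorem2:
  fixes Y :: "nat \<Rightarrow> real ^ 'm" and w :: "nat \<Rightarrow> real"
    and \<delta> :: real and N p :: nat
  assumes "\<delta> > 0" and "N \<ge> 1"
    and "\<And>j. j \<in> {1..N} \<Longrightarrow> Y j \<noteq> 0"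
  shows "measure_pmf.prob (phase2 \<delta> Y w N)
           {u. norm u \<le> \<delta> * sqrt (2 * pi * real p * real CARD('m) * ln (real N))
                          * (MAX j\<in>{1..N}. norm (Y j))}
         \<ge> 1 - sqrt 2 * real CARD('m) / real N ^ p"
proof (cases "N = 1 \<or> p = 0")
  case True
  have "real N ^ p = 1" using True by auto
  moreover have "real CARD('m) \<ge> 1" by simp
  moreover have "sqrt 2 \<ge> 1" by simp
  ultimately have "1 - sqrt 2 * real CARD('m) / real N ^ p \<le> 0"
  proof -
    have "1 * 1 \<le> sqrt 2 * real CARD('m)" by (intro mult_mono) (use \<open>sqrt 2 \<ge> 1\<close> \<open>real CARD('m) \<ge> 1\<close> in auto)
    thus ?thesis using \<open>real N ^ p = 1\<close> by simp
  qed
  moreover have "0 \<le> measure_pmf.prob (phase2 \<delta> Y w N)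
           {u. norm u \<le> \<delta> * sqrt (2 * pi * real p * real CARD('m) * ln (real N))
                          * (MAX j\<in>{1..N}. norm (Y j))}" by (rule measure_nonneg)
  ultimately show ?thesis by linarith
next
  case False
  hence N2: "N \<ge> 2" and p1: "p \<ge> 1" using assms(2) by auto
  define M where "M = (MAX j\<in>{1..N}. norm (Y j))"
  define m where "m = real CARD('m)"
  define L where "L = ln (real N)"
  define a where "a = \<delta> * M * sqrt (2 * pi * real p * L)"
  define R where "R = \<delta> * sqrt (2 * pi * real p * m * L) * M"
  define s where "s = 4 * a / (\<delta>\<^sup>2 * M\<^sup>2)"
  define B where "B = exp (- (4 * pi * real p * L))"
  have Mge: "norm (Y j) \<le> M" if "j \<in> {1..N}" for j
    unfolding M_def using that by (intro Max_ge) auto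
  have Y1: "norm (Y 1) > 0" using assms(2) assms(3)[of 1] by simp
  have "norm (Y 1) \<le> M" using assms(2) by (intro Mge) auto
  hence Mpos: "M > 0" using Y1 by linarith
  have Lpos: "L > 0" unfolding L_def using N2 by simp
  have m1: "m \<ge> 1" unfolding m_def by simp
  have apos: "a > 0" unfolding a_def using assms(1) Mpos Lpos p1 by simp
  have spos: "s > 0" unfolding s_def using apos assms(1) Mpos by simp
  have Yb: "\<forall>j\<in>{1..N}. Y j \<noteq> 0 \<and> norm (Y j) \<le> M" using assms(3) Mge by auto
  have Ra: "R = sqrt m * a"
    unfolding R_def a_def by (simp add: real_sqrt_mult)
  have expo: "- (s * a) + \<delta>\<^sup>2 * M\<^sup>2 / 8 * s\<^sup>2 = - (4 * pi * real p * L)"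
  proof -
    have "a\<^sup>2 = \<delta>\<^sup>2 * M\<^sup>2 * (2 * pi * real p * L)"
      unfolding a_def using Lpos by (simp add: power_mult_distrib)
    thus ?thesis unfolding s_def using assms(1) Mpos
      by (simp add: field_simps power2_eq_square)
  qed
  have tailA: "measure_pmf.prob (phase2 \<delta> Y w N) {u. s * a \<le> (s *\<^sub>R axis i 1) \<bullet> u} \<le> B" for i :: 'm
    using tail_phase2[OF assms(1) Yb, where b="s * a" and v="s *\<^sub>R axis i 1" and w=w] spos
    unfolding B_def expo[symmetric] by simp
  have tailB: "measure_pmf.prob (phase2 \<delta> Y w N) {u. s * a \<le> (- s *\<^sub>R axis i 1) \<bullet> u} \<le> B" for i :: 'm
    using tail_phase2[OF assms(1) Yb, where b="s * a" and v="- s *\<^sub>R axis i 1" and w=w] spos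
    unfolding B_def expo[symmetric] by simp
  define A where "A = (\<lambda>i::'m. {u::real^'m. s * a \<le> (s *\<^sub>R axis i 1) \<bullet> u} \<union> {u. s * a \<le> (- s *\<^sub>R axis i 1) \<bullet> u})"
  have sub: "- {u. norm u \<le> R} \<subseteq> (\<Union>i. A i)"
  proof
    fix u :: "real ^ 'm"
    assume u: "u \<in> - {u. norm u \<le> R}"
    show "u \<in> (\<Union>i. A i)"
    proof (rule ccontr)
      assume "u \<notin> (\<Union>i. A i)"
      hence "\<forall>i. s * u $ i < s * a \<and> - (s * u $ i) < s * a"
        unfolding A_def by (auto simp: inner_axis' not_le)
      have ab: "\<bar>u $ i\<bar> \<le> a" for i
      proof -
        have h1: "s * u $ i < s * a" and h2: "s * (- u $ i) < s * a" using \<open>\<forall>i. _\<close> by auto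
        have "u $ i < a" using h1 spos by (rule mult_less_cancel_left_pos[THEN iffD1, rotated])
        moreover have "- u $ i < a" using h2 spos by (rule mult_less_cancel_left_pos[THEN iffD1, rotated])
        ultimately show ?thesis by linarith
      qed
      have "(norm u)\<^sup>2 = (\<Sum>i\<in>UNIV. (u $ i)\<^sup>2)"
        unfolding power2_norm_eq_inner inner_vec_def by (simp add: power2_eq_square)
      also have "\<dots> \<le> (\<Sum>i\<in>(UNIV::'m set). a\<^sup>2)"
      proof (intro sum_mono)
        fix i :: 'm
        have "\<bar>u $ i\<bar>\<^sup>2 \<le> a\<^sup>2" using ab[of i] by (intro power_mono) auto
        thus "(u $ i)\<^sup>2 \<le> a\<^sup>2" by simp
      qed
      also have "\<dots> = (sqrt m * a)\<^sup>2" unfolding m_def using apos by (simp add: power_mult_distrib)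
      finally have "(norm u)\<^sup>2 \<le> (sqrt m * a)\<^sup>2" .
      hence "norm u \<le> sqrt m * a"
        by (rule power2_le_imp_le) (use apos m1 in auto)
      thus False using u Ra by simp
    qed
  qed
  let ?P = "measure_pmf.prob (phase2 \<delta> Y w N)"
  have "?P (- {u. norm u \<le> R}) \<le> ?P (\<Union>i. A i)"
    by (rule measure_pmf.finite_measure_mono[OF sub]) simp
  also have "\<dots> \<le> (\<Sum>i\<in>UNIV. ?P (A i))"
    by (rule measure_pmf.finite_measure_subadditive_finite) simp_all
  also have "\<dots> \<le> (\<Sum>i\<in>(UNIV::'m set). 2 * B)"
  proof (intro sum_mono)
    fix i :: 'm
    have "?P (A i) \<le> ?P {u. s * a \<le> (s *\<^sub>R axis i 1) \<bullet> u} + ?P {u. s * a \<le> (- s *\<^sub>R axis i 1) \<bullet> u}"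
      unfolding A_def by (rule measure_Un_le) simp_all
    thus "?P (A i) \<le> 2 * B" using tailA[of i] tailB[of i] by linarith
  qed
  also have "\<dots> = m * (2 * B)" unfolding m_def by simp
  also have "\<dots> \<le> m * (sqrt 2 / real N ^ p)"
  proof -
    have "2 * B \<le> sqrt 2 / real N ^ p"
      unfolding B_def L_def by (rule numeric_bound[OF N2 p1])
    thus ?thesis using m1 by (intro mult_left_mono) auto
  qed
  finally have bad: "?P (- {u. norm u \<le> R}) \<le> sqrt 2 * m / real N ^ p" by (simp add: ac_simps)
  have "?P (UNIV - {u. norm u \<le> R}) = 1 - ?P {u. norm u \<le> R}"
    using measure_pmf.prob_compl[of "{u. norm u \<le> R}"] by simp
  hence "?P {u. norm u \<le> R} = 1 - ?P (- {u. norm u \<le> R})" by (simp add: Compl_eq_Diff_UNIV)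
  hence "?P {u. norm u \<le> R} \<ge> 1 - sqrt 2 * m / real N ^ p" using bad by simp
  thus ?thesis unfolding R_def M_def m_def L_def .
qed

end
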